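(* Let $n\ge 2$ be an integer and let $(x_0,y_0),\dots,(x_n,y_n)\in\mathbb{R}^2$ with $a:=x_0<x_1<\dots<x_n=:b$. For each $k\in\{1,\dots,n\}$ fix $d_k\in[0,1)$ and put \[ a_k=\frac{x_k-x_{k-1}}{x_n-x_0},\quad b_k=\frac{x_nx_{k-1}-x_0x_k}{x_n-x_0},\quad c_k=\frac{y_k-y_{k-1}}{x_n-x_0}-d_k\frac{y_n-y_0}{x_n-x_0},\quad e_k=\frac{x_ny_{k-1}-x_0y_k}{x_n-x_0}-d_k\frac{x_ny_0-x_0y_n}{x_n-x_0}, \] and $f_k(x,y)=(a_kx+b_k,\;c_kx+d_ky+e_k)$. Let $\theta=1$ if $c_1=\dots=c_n=0$ and $\theta=\dfrac{1-\max_k a_k}{2\max_k|c_k|}$ otherwise. Let $f:[a,b]\to\mathbb{R}$ be the affine fractal interpolation function associated with these data. For $k\in\{1,\dots,n\}$ set \[ u_k=\frac{b_k}{1-a_k},\qquad v_k=\frac{b_kc_k}{(1-a_k)(1-d_k)}+\frac{e_k}{1-d_k},\qquad s_k=\max\{a_k+\theta|c_k|,\,d_k\}, \] and $M=\max_{i,j\in\{1,\dots,n\}}\left(|u_i-u_j|+\theta|v_i-v_j|\right)$. Let $\sigma$ be a permutation of $\{1,\dots,n\}$ with $s_{\sigma(1)}\le\dots\le s_{\sigma(n)}$, and let $D=1-s_{\sigma(n-1)}s_{\sigma(n)}$. Define \[ A=\min\left\{\min_{1\le j\le n-1}\left(v_{\sigma(j)}-\frac{Ms_{\sigma(j)}(1+s_{\sigma(n)})}{\theta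 D}\right),\ v_{\sigma(n)}-\frac{Ms_{\sigma(n)}(1+s_{\sigma(n-1)})}{\theta D}\right\}, \] \[ B=\max\left\{\max_{1\le j\le n-1}\left(v_{\sigma(j)}+\frac{Ms_{\sigma(j)}(1+s_{\sigma(n)})}{\theta D}\right),\ v_{\sigma(n)}+\frac{Ms_{\sigma(n)}(1+s_{\sigma(n-1)})}{\theta D}\right\}. \] Then $f([a,b])\subseteq[A,B]$.
   Context: The maps $f_k$ are contractions for the metric $\rho((u_1,v_1),(u_2,v_2))=|u_1-u_2|+\theta|v_1-v_2|$ on $\mathbb{R}^2$, and the attractor of the iterated function system $\{f_1,\dots,f_n\}$ is the unique nonempty compact set $K\subseteq\mathbb{R}^2$ with $K=\bigcup_{k=1}^n f_k(K)$. The affine fractal interpolation function is the continuous function $f:[a,b]\to\mathbb{R}$ with $f(x_k)=y_k$ for all $k\in\{0,\dots,n\}$ whose graph $\{(x,f(x)):x\in[a,b]\}$ equals this attractor. Here $(u_k,v_k)$ is the fixed point of $f_k$ and $s_k$ its Lipschitz constant with respect to $\rho$. *)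

theory Defs
  imports "HOL-Analysis.Analysis"
begin

definition ifs_attractor :: "(nat \<Rightarrow> real \<times> real \<Rightarrow> real \<times> real) \<Rightarrow> nat \<Rightarrow> (real \<times> real) set" where
  "ifs_attractor fs n = (THE K. K \<noteq> {} \<and> compact K \<and> K = (\<Union>k\<in>{1..n}. fs k ` K))"

end

theory Submission
  imports Defs
begin


definition rho :: "real \<Rightarrow> real \<times> real \<Rightarrow> real \<times> real \<Rightarrow> real" where
  "rho \<theta> p q = \<bar>fst p - fst q\<bar> + \<theta> * \<bar>snd p - snd q\<bar>"

inductive_set orbit :: "(nat \<Rightarrow> real \<times> real \<Rightarrow> real \<times> real) \<Rightarrow> nat \<Rightarrow> real \<times> real \<Rightarrow> (real \<times> real) set"
  for fs n p0 where
  base: "p0 \<in> orbit fs n p0"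
| step: "z \<in> orbit fs n p0 \<Longrightarrow> k \<in> {1..n} \<Longrightarrow> fs k z \<in> orbit fs n p0"

lemma rho_tri: "\<theta> \<ge> 0 \<Longrightarrow> rho \<theta> p r \<le> rho \<theta> p q + rho \<theta> q r"
proof -
  assume t: "\<theta> \<ge> 0"
  have "\<bar>snd p - snd r\<bar> \<le> \<bar>snd p - snd q\<bar> + \<bar>snd q - snd r\<bar>" by linarith
  then have "\<theta> * \<bar>snd p - snd r\<bar> \<le> \<theta> * \<bar>snd p - snd q\<bar> + \<theta> * \<bar>snd q - snd r\<bar>"
    using t by (metis distrib_left mult_left_mono)
  then show ?thesis unfolding rho_def by linarith
qed

lemma rho_nonneg: "\<theta> \<ge> 0 \<Longrightarrow> rho \<theta> p q \<ge> 0"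
  unfolding rho_def by simp

lemma rho_sym: "rho \<theta> p q = rho \<theta> q p"
  unfolding rho_def by (simp add: abs_minus_commute)

lemma dist_le_rho:
  assumes "\<theta> > 0" shows "min 1 \<theta> * dist p q \<le> rho \<theta> p q"
proof -
  obtain p1 p2 q1 q2 where pq: "p = (p1, p2)" "q = (q1, q2)" by (cases p, cases q) auto
  have "dist p q \<le> \<bar>p1 - q1\<bar> + \<bar>p2 - q2\<bar>"
    using sqrt_sum_squares_le_sum_abs[of "p1 - q1" "p2 - q2"]
    by (simp add: pq dist_Pair_Pair dist_real_def)
  then have "min 1 \<theta> * dist p q \<le> min 1 \<theta> * \<bar>p1 - q1\<bar> + min 1 \<theta> * \<bar>p2 - q2\<bar>"
    using assms by (metis distrib_left min_less_iff_conj mult_left_mono order_less_imp_le zero_less_one)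
  also have "\<dots> \<le> \<bar>p1 - q1\<bar> + \<theta> * \<bar>p2 - q2\<bar>"
  proof -
    have "min 1 \<theta> * \<bar>p1 - q1\<bar> \<le> 1 * \<bar>p1 - q1\<bar>" by (intro mult_right_mono) auto
    moreover have "min 1 \<theta> * \<bar>p2 - q2\<bar> \<le> \<theta> * \<bar>p2 - q2\<bar>" by (intro mult_right_mono) auto
    ultimately show ?thesis by simp
  qed
  finally show ?thesis by (simp add: rho_def pq)
qed

lemma rho_le_norm:
  assumes "\<theta> \<ge> 0" shows "rho \<theta> p q \<le> (1 + \<theta>) * (norm p + norm q)"
proof -
  have a: "\<bar>fst p - fst q\<bar> \<le> norm p + norm q"
    using norm_fst_le[of "fst p" "snd p"] norm_fst_le[of "fst q" "snd q"] by simp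
  have b: "\<bar>snd p - snd q\<bar> \<le> norm p + norm q"
    using norm_snd_le[of "snd p" "fst p"] norm_snd_le[of "snd q" "fst q"] by simp
  have "\<theta> * \<bar>snd p - snd q\<bar> \<le> \<theta> * (norm p + norm q)" using b assms by (rule mult_left_mono)
  then show ?thesis using a unfolding rho_def by (simp add: algebra_simps)
qed

lemma ifs_subset:
  fixes fs :: "nat \<Rightarrow> real \<times> real \<Rightarrow> real \<times> real"
  assumes th: "\<theta> > 0" and s0: "0 \<le> s" and s1: "s < 1"
    and contr: "\<And>k p q. k \<in> {1..n} \<Longrightarrow> rho \<theta> (fs k p) (fs k q) \<le> s * rho \<theta> p q"
    and K1: "compact K1" "K1 = (\<Union>k\<in>{1..n}. fs k ` K1)"
    and K2: "K2 \<noteq> {}" "compact K2" "K2 = (\<Union>k\<in>{1..n}. fs k ` K2)"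
  shows "K1 \<subseteq> K2"
proof
  obtain B1 where B1: "\<And>p. p \<in> K1 \<Longrightarrow> norm p \<le> B1"
    using compact_imp_bounded[OF K1(1)] by (auto simp: bounded_iff)
  obtain B2 where B2: "\<And>p. p \<in> K2 \<Longrightarrow> norm p \<le> B2"
    using compact_imp_bounded[OF K2(2)] by (auto simp: bounded_iff)
  obtain q0 where q0: "q0 \<in> K2" using K2(1) by auto
  define R where "R = (1 + \<theta>) * (B1 + B2)"
  have main: "\<forall>p\<in>K1. \<exists>q\<in>K2. rho \<theta> p q \<le> s ^ m * R" for m
  proof (induction m)
    case 0
    show ?case
    proof
      fix p assume "p \<in> K1"
      have "rho \<theta> p q0 \<le> (1 + \<theta>) * (norm p + norm q0)" using th by (intro rho_le_norm) auto
      also have "\<dots> \<le> R" unfolding R_def using B1[OF \<open>p \<in> K1\<close>] B2[OF q0] th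
        by (intro mult_left_mono) auto
      finally show "\<exists>q\<in>K2. rho \<theta> p q \<le> s ^ 0 * R" using q0 by auto
    qed
  next
    case (Suc m)
    show ?case
    proof
      fix p assume "p \<in> K1"
      then obtain k p' where k: "k \<in> {1..n}" "p' \<in> K1" "p = fs k p'" using K1(2) by blast
      then obtain q' where q': "q' \<in> K2" "rho \<theta> p' q' \<le> s ^ m * R" using Suc by blast
      have "fs k q' \<in> K2" using K2(3) k q' by blast
      moreover have "rho \<theta> p (fs k q') \<le> s ^ Suc m * R"
      proof -
        have "rho \<theta> p (fs k q') \<le> s * rho \<theta> p' q'" using contr k by simp
        also have "\<dots> \<le> s * (s ^ m * R)" using q'(2) s0 by (simp add: mult_left_mono)
        finally show ?thesis by simp
      qed
      ultimately show "\<exists>q\<in>K2. rho \<theta> p q \<le> s ^ Suc m * R" by blast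
    qed
  qed
  fix p assume p: "p \<in> K1"
  have R0: "R \<ge> 0" unfolding R_def using B1[OF p] B2[OF q0] th
    by (metis add_nonneg_nonneg norm_ge_zero order_trans less_imp_le mult_nonneg_nonneg add_pos_nonneg zero_less_one)
  have mpos: "min 1 \<theta> > 0" using th by simp
  have "\<forall>e>0. \<exists>y\<in>K2. dist y p < e"
  proof (intro allI impI)
    fix e :: real assume e: "e > 0"
    obtain m where m: "s ^ m < e * min 1 \<theta> / (R + 1)"
      using real_arch_pow_inv[OF _ s1, of "e * min 1 \<theta> / (R + 1)"] e mpos R0 by auto
    obtain q where q: "q \<in> K2" "rho \<theta> p q \<le> s ^ m * R" using main p by blast
    have "min 1 \<theta> * dist q p \<le> rho \<theta> p q" using dist_le_rho[OF th, of q p] rho_sym by metis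
    also have "\<dots> \<le> s ^ m * (R + 1)" using q(2) s0 by (smt (verit) zero_le_power mult_left_mono)
    also have "\<dots> < e * min 1 \<theta>" using m R0 by (simp add: field_simps)
    finally have "dist q p < e" using mpos by (simp add: mult.commute)
    then show "\<exists>y\<in>K2. dist y p < e" using q by blast
  qed
  then show "p \<in> K2" using closed_approachable[OF compact_imp_closed[OF K2(2)]] by blast
qed

lemma ifs_exists:
  fixes fs :: "nat \<Rightarrow> real \<times> real \<Rightarrow> real \<times> real"
  assumes th: "\<theta> > 0" and s0: "0 \<le> s" and s1: "s < 1"
    and contr: "\<And>k p q. k \<in> {1..n} \<Longrightarrow> rho \<theta> (fs k p) (fs k q) \<le> s * rho \<theta> p q"
    and cont: "\<And>k. k \<in> {1..n} \<Longrightarrow> continuous_on UNIV (fs k)"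
    and k0: "k0 \<in> {1..n}" "fs k0 p0 = p0"
  shows "\<exists>K. K \<noteq> {} \<and> compact K \<and> K = (\<Union>k\<in>{1..n}. fs k ` K)"
proof -
  define Ob where "Ob = orbit fs n p0"
  define c where "c = Max ((\<lambda>k. rho \<theta> (fs k p0) p0) ` {1..n})"
  have cge: "rho \<theta> (fs k p0) p0 \<le> c" if "k \<in> {1..n}" for k
    unfolding c_def using that by (intro Max_ge) auto
  have c0: "c \<ge> 0" using cge[OF k0(1)] rho_nonneg[of \<theta>] th by (metis order_trans less_imp_le)
  define R where "R = c / (1 - s)"
  have R0: "R \<ge> 0" unfolding R_def using c0 s1 by simp
  have Req: "s * R + c = R" unfolding R_def using s1 by (simp add: field_simps)
  have bnd: "rho \<theta> z p0 \<le> R" if "z \<in> Ob" for z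
    using that unfolding Ob_def
  proof (induction rule: orbit.induct)
    case base
    then show ?case using R0 by (simp add: rho_def)
  next
    case (step z k)
    have "rho \<theta> (fs k z) p0 \<le> rho \<theta> (fs k z) (fs k p0) + rho \<theta> (fs k p0) p0"
      using th by (intro rho_tri) auto
    also have "\<dots> \<le> s * rho \<theta> z p0 + c" using contr[OF step(2)] cge[OF step(2)] by (intro add_mono)
    also have "\<dots> \<le> s * R + c" using step(3) s0 by (simp add: mult_left_mono)
    finally show ?case using Req by simp
  qed
  have mpos: "min 1 \<theta> > 0" using th by simp
  have "Ob \<subseteq> cball p0 (R / min 1 \<theta>)"
  proof
    fix z assume "z \<in> Ob"
    have "min 1 \<theta> * dist p0 z \<le> R" using dist_le_rho[OF th, of z p0] bnd[OF \<open>z \<in> Ob\<close>]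
      by (simp add: dist_commute)
    then show "z \<in> cball p0 (R / min 1 \<theta>)" using mpos by (simp add: field_simps)
  qed
  then have bO: "bounded Ob" using bounded_cball bounded_subset by blast
  define K where "K = closure Ob"
  have Kc: "compact K" unfolding K_def using bO by (simp add: compact_eq_bounded_closed bounded_closure)
  have Kne: "K \<noteq> {}" unfolding K_def Ob_def using orbit.base closure_subset by blast
  have sub1: "fs k ` K \<subseteq> K" if k: "k \<in> {1..n}" for k
    unfolding K_def
  proof (rule image_closure_subset)
    show "continuous_on (closure Ob) (fs k)" using cont[OF k] continuous_on_subset by blast
    show "closed (closure Ob)" by simp
    show "fs k ` Ob \<subseteq> closure Ob" unfolding Ob_def using orbit.step[OF _ k] closure_subset by blast
  qed
  have FKc: "compact (\<Union>k\<in>{1..n}. fs k ` K)"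
    using Kc cont by (intro compact_UN) (auto intro: compact_continuous_image continuous_on_subset)
  have "Ob \<subseteq> (\<Union>k\<in>{1..n}. fs k ` K)"
  proof
    fix z assume "z \<in> Ob"
    then show "z \<in> (\<Union>k\<in>{1..n}. fs k ` K)" unfolding Ob_def
    proof (cases rule: orbit.cases)
      case base
      then show ?thesis using k0 Kne unfolding K_def Ob_def
        by (metis (no_types, lifting) UN_I closure_subset image_eqI orbit.base subsetD)
    next
      case (step w k)
      then show ?thesis unfolding K_def Ob_def using closure_subset by blast
    qed
  qed
  then have "K \<subseteq> (\<Union>k\<in>{1..n}. fs k ` K)"
    using FKc closure_minimal[OF _ compact_imp_closed[OF FKc]] unfolding K_def by blast
  moreover have "(\<Union>k\<in>{1..n}. fs k ` K) \<subseteq> K" using sub1 by blast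
  ultimately show ?thesis using Kc Kne by blast
qed

lemma ifs_ex1:
  fixes fs :: "nat \<Rightarrow> real \<times> real \<Rightarrow> real \<times> real"
  assumes th: "\<theta> > 0" and s0: "0 \<le> s" and s1: "s < 1"
    and contr: "\<And>k p q. k \<in> {1..n} \<Longrightarrow> rho \<theta> (fs k p) (fs k q) \<le> s * rho \<theta> p q"
    and cont: "\<And>k. k \<in> {1..n} \<Longrightarrow> continuous_on UNIV (fs k)"
    and k0: "k0 \<in> {1..n}" "fs k0 p0 = p0"
  shows "\<exists>!K. K \<noteq> {} \<and> compact K \<and> K = (\<Union>k\<in>{1..n}. fs k ` K)"
proof -
  obtain K where K: "K \<noteq> {} \<and> compact K \<and> K = (\<Union>k\<in>{1..n}. fs k ` K)"
    using ifs_exists[of \<theta> s n fs k0 p0, OF th s0 s1 contr cont k0] by blast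
  show ?thesis
  proof (rule ex1I[of _ K])
    show "K \<noteq> {} \<and> compact K \<and> K = (\<Union>k\<in>{1..n}. fs k ` K)" by (rule K)
    fix K' assume K': "K' \<noteq> {} \<and> compact K' \<and> K' = (\<Union>k\<in>{1..n}. fs k ` K')"
    show "K' = K"
      using ifs_subset[of \<theta> s n fs K' K, OF th s0 s1 contr] ifs_subset[of \<theta> s n fs K K', OF th s0 s1 contr] K K'
      by blast
  qed
qed



lemma bound_core:
  fixes r s :: "nat \<Rightarrow> real" and \<sigma> :: "nat \<Rightarrow> nat" and n :: nat and M D :: real
  assumes n2: "n \<ge> 2" and perm: "\<sigma> permutes {1..n}"
    and sorted: "\<And>i j. 1 \<le> i \<Longrightarrow> i \<le> j \<Longrightarrow> j \<le> n \<Longrightarrow> s (\<sigma> i) \<le> s (\<sigma> j)"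
    and srange: "\<And>k. k \<in> {1..n} \<Longrightarrow> 0 \<le> s k \<and> s k < 1"
    and M0: "M \<ge> 0" and r0: "\<And>k. k \<in> {1..n} \<Longrightarrow> r k \<ge> 0"
    and rec: "\<And>k. k \<in> {1..n} \<Longrightarrow> r k = 0 \<or> (\<exists>j\<in>{1..n}. j \<noteq> k \<and> r k \<le> s k * (r j + M))"
    and Ddef: "D = 1 - s (\<sigma> (n - 1)) * s (\<sigma> n)"
  shows "D > 0"
    and "\<And>k. k \<in> {1..n} \<Longrightarrow> r k \<le> M * s k * (1 + s (\<sigma> n)) / D"
    and "r (\<sigma> n) \<le> M * s (\<sigma> n) * (1 + s (\<sigma> (n - 1))) / D"
proof -
  define sn where "sn = s (\<sigma> n)"
  define sm where "sm = s (\<sigma> (n - 1))"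
  define P where "P = sm * sn"
  have sig_in: "\<sigma> i \<in> {1..n}" if "i \<in> {1..n}" for i
    using perm that by (metis permutes_in_image)
  have nin: "n \<in> {1..n}" "n - 1 \<in> {1..n}" using n2 by auto
  have snr: "0 \<le> sn" "sn < 1" using srange[OF sig_in[OF nin(1)]] sn_def by auto
  have smr: "0 \<le> sm" "sm < 1" using srange[OF sig_in[OF nin(2)]] sm_def by auto
  have "sm * sn \<le> 1 * sn" using smr snr by (intro mult_right_mono) auto
  then have P1: "P < 1" "P \<ge> 0" unfolding P_def using snr smr by auto
  show Dpos: "D > 0" using P1 Ddef P_def sm_def sn_def by simp
  have Deq: "D = 1 - P" using Ddef P_def sm_def sn_def by simp
  have le_top: "s j \<le> sn" if "j \<in> {1..n}" for j
  proof -
    have "j \<in> \<sigma> ` {1..n}" using permutes_image[OF perm] that by simp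
    then obtain i where i: "i \<in> {1..n}" "\<sigma> i = j" by blast
    show ?thesis using sorted[of i n] i sn_def by auto
  qed
  have le_sec: "s j \<le> sm" if "j \<in> {1..n}" "j \<noteq> \<sigma> n" for j
  proof -
    have "j \<in> \<sigma> ` {1..n}" using permutes_image[OF perm] that by simp
    then obtain i where i: "i \<in> {1..n}" "\<sigma> i = j" by blast
    then have "i \<noteq> n" using that by auto
    then show ?thesis using sorted[of i "n - 1"] i sm_def by auto
  qed
  have prod_le: "s k * s j \<le> P" if "k \<in> {1..n}" "j \<in> {1..n}" "j \<noteq> k" for j k
  proof (cases "j = \<sigma> n")
    case True
    then have "k \<noteq> \<sigma> n" using that by auto
    then have "s k \<le> sm" using le_sec that by auto
    moreover have "s j \<le> sn" using le_top that by auto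
    ultimately show ?thesis unfolding P_def using srange[OF that(2)] smr
      by (intro mult_mono) auto
  next
    case False
    then have "s j \<le> sm" using le_sec that by auto
    moreover have "s k \<le> sn" using le_top that by auto
    ultimately have "s j * s k \<le> sm * sn" using srange[OF that(1)] smr
      by (intro mult_mono) auto
    then show ?thesis unfolding P_def by (simp add: mult.commute)
  qed
  define t where "t = Max (r ` {1..n})"
  have rt: "r k \<le> t" if "k \<in> {1..n}" for k unfolding t_def using that by simp
  obtain ks where ks: "ks \<in> {1..n}" "r ks = t"
  proof -
    have "t \<in> r ` {1..n}" unfolding t_def using nin(1) by (intro Max_in) auto
    then show ?thesis using that by auto
  qed
  have t0: "t \<ge> 0" using r0[OF ks(1)] ks by simp
  have rb: "r k \<le> s k * (t + M)" if k: "k \<in> {1..n}" for k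
    using rec[OF k]
  proof
    assume "r k = 0" then show ?thesis using srange[OF k] t0 M0 by simp
  next
    assume "\<exists>j\<in>{1..n}. j \<noteq> k \<and> r k \<le> s k * (r j + M)"
    then obtain j where j: "j \<in> {1..n}" "r k \<le> s k * (r j + M)" by blast
    have "s k * (r j + M) \<le> s k * (t + M)" using rt[OF j(1)] srange[OF k] by (simp add: mult_left_mono)
    then show ?thesis using j by simp
  qed
  have tD: "t * D \<le> M * (sn + P)"
    using rec[OF ks(1)]
  proof
    assume "r ks = 0" then show ?thesis using ks M0 snr P1 by simp
  next
    assume "\<exists>j\<in>{1..n}. j \<noteq> ks \<and> r ks \<le> s ks * (r j + M)"
    then obtain j where j: "j \<in> {1..n}" "j \<noteq> ks" "t \<le> s ks * (r j + M)" using ks by blast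
    have sk: "0 \<le> s ks" "s ks \<le> sn" using srange[OF ks(1)] le_top[OF ks(1)] by auto
    have sj: "0 \<le> s j" using srange[OF j(1)] by auto
    have "t \<le> s ks * (s j * (t + M) + M)"
      using j(3) rb[OF j(1)] sk by (smt (verit) mult_left_mono)
    then have h1: "t - (s ks * s j) * t \<le> M * (s ks + s ks * s j)" by (simp add: algebra_simps)
    have h2: "(s ks * s j) * t \<le> P * t" using prod_le[OF ks(1) j(1) j(2)] t0 by (simp add: mult_right_mono)
    have h3: "M * (s ks + s ks * s j) \<le> M * (sn + P)"
      using M0 sk prod_le[OF ks(1) j(1) j(2)] by (intro mult_left_mono) auto
    have h4: "t * D = t - P * t" unfolding Deq by (simp add: algebra_simps)
    from h1 h2 h3 h4 show ?thesis by linarith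
  qed
  have tM: "t + M \<le> M * (1 + sn) / D"
  proof -
    have e1: "(t + M) * D = t * D + M - M * P" unfolding Deq by (simp add: algebra_simps)
    have e2: "M * (sn + P) = M * sn + M * P" "M * (1 + sn) = M + M * sn" by (simp_all add: algebra_simps)
    have "(t + M) * D \<le> M * (1 + sn)" using tD e1 e2 by linarith
    then show ?thesis using Dpos by (simp add: field_simps)
  qed
  show gen: "r k \<le> M * s k * (1 + s (\<sigma> n)) / D" if k: "k \<in> {1..n}" for k
  proof -
    have "r k \<le> s k * (M * (1 + sn) / D)"
      using rb[OF k] tM srange[OF k] by (smt (verit) mult_left_mono)
    then show ?thesis by (simp add: sn_def mult_ac)
  qed
  show "r (\<sigma> n) \<le> M * s (\<sigma> n) * (1 + s (\<sigma> (n - 1))) / D"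
    using rec[OF sig_in[OF nin(1)]]
  proof
    assume "r (\<sigma> n) = 0" then show ?thesis using M0 snr smr Dpos unfolding sn_def sm_def by simp
  next
    assume "\<exists>j\<in>{1..n}. j \<noteq> \<sigma> n \<and> r (\<sigma> n) \<le> s (\<sigma> n) * (r j + M)"
    then obtain j where j: "j \<in> {1..n}" "j \<noteq> \<sigma> n" "r (\<sigma> n) \<le> sn * (r j + M)"
      unfolding sn_def by blast
    have "r j \<le> M * s j * (1 + sn) / D" using gen[OF j(1)] sn_def by simp
    also have "\<dots> \<le> M * sm * (1 + sn) / D"
      using le_sec[OF j(1,2)] M0 snr Dpos by (intro divide_right_mono mult_right_mono mult_left_mono) auto
    finally have "r j * D \<le> M * sm * (1 + sn)" using Dpos by (simp add: field_simps)
    moreover have "(r j + M) * D = r j * D + M - M * P" unfolding Deq by (simp add: algebra_simps)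
    moreover have "M * sm * (1 + sn) = M * sm + M * P" "M * (1 + sm) = M + M * sm"
      unfolding P_def by (simp_all add: algebra_simps)
    ultimately have "(r j + M) * D \<le> M * (1 + sm)" by linarith
    then have "r j + M \<le> M * (1 + sm) / D" using Dpos by (simp add: field_simps)
    then have "r (\<sigma> n) \<le> sn * (M * (1 + sm) / D)"
      using j(3) snr by (smt (verit) mult_left_mono)
    then show ?thesis by (simp add: sn_def sm_def mult_ac)
  qed
qed



lemma fix_aux2:
  fixes al be ga de ep :: real
  assumes "1 - al \<noteq> 0" "1 - de \<noteq> 0"
  shows "ga * (be / (1 - al)) + de * (be * ga / ((1 - al) * (1 - de)) + ep / (1 - de)) + ep
       = be * ga / ((1 - al) * (1 - de)) + ep / (1 - de)"
proof -
  define V where "V = be * ga / ((1 - al) * (1 - de)) + ep / (1 - de)"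
  have "(1 - de) * V = be * ga / (1 - al) + ep" unfolding V_def using assms
    by (simp add: distrib_left)
  also have "\<dots> = ga * (be / (1 - al)) + ep" by simp
  finally have "ga * (be / (1 - al)) + de * V + ep = V" by (simp add: algebra_simps)
  then show ?thesis unfolding V_def .
qed
lemma fix_aux1:
  fixes al be :: real
  assumes "1 - al \<noteq> 0"
  shows "al * (be / (1 - al)) + be = be / (1 - al)"
  using assms by (simp add: field_simps)

lemma xmono_aux:
  fixes x :: "nat \<Rightarrow> real"
  assumes "\<And>k. k < n \<Longrightarrow> x k < x (Suc k)"
  shows "i < j \<Longrightarrow> j \<le> n \<Longrightarrow> x i < x j"
proof (induction j)
  case 0 then show ?case by simp
next
  case (Suc j)
  show ?case
  proof (cases "i = j")
    case True then show ?thesis using assms Suc by simp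
  next
    case False
    then have "x i < x j" using Suc by simp
    also have "x j < x (Suc j)" using assms Suc by simp
    finally show ?thesis .
  qed
qed

theorem theorem3p2:
  fixes n :: nat and x y d :: "nat \<Rightarrow> real" and f :: "real \<Rightarrow> real"
    and \<sigma> :: "nat \<Rightarrow> nat"
  assumes n2: "n \<ge> 2"
    and xinc: "\<And>k. k < n \<Longrightarrow> x k < x (Suc k)"
    and drange: "\<And>k. k \<in> {1..n} \<Longrightarrow> 0 \<le> d k \<and> d k < 1"
  defines "a \<equiv> \<lambda>k. (x k - x (k - 1)) / (x n - x 0)"
    and "b \<equiv> \<lambda>k. (x n * x (k - 1) - x 0 * x k) / (x n - x 0)"
    and "c \<equiv> \<lambda>k. (y k - y (k - 1)) / (x n - x 0) - d k * (y n - y 0) / (x n - x 0)"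
    and "e \<equiv> \<lambda>k. (x n * y (k - 1) - x 0 * y k) / (x n - x 0)
                   - d k * (x n * y 0 - x 0 * y n) / (x n - x 0)"
  defines "fk \<equiv> \<lambda>k (p :: real \<times> real). (a k * fst p + b k, c k * fst p + d k * snd p + e k)"
  defines "\<theta> \<equiv> (if (\<forall>k\<in>{1..n}. c k = 0) then 1
               else (1 - Max (a ` {1..n})) / (2 * Max ((\<lambda>k. \<bar>c k\<bar>) ` {1..n})))"
  defines "u \<equiv> \<lambda>k. b k / (1 - a k)"
    and "v \<equiv> \<lambda>k. b k * c k / ((1 - a k) * (1 - d k)) + e k / (1 - d k)"
    and "s \<equiv> \<lambda>k. max (a k + \<theta> * \<bar>c k\<bar>) (d k)"
  defines "M \<equiv> Max {\<bar>u i - u j\<bar> + \<theta> * \<bar>v i - v j\<bar> | i j. i \<in> {1..n} \<and> j \<in> {1..n}}"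
  assumes fcont: "continuous_on {x 0..x n} f"
    and finterp: "\<And>k. k \<le> n \<Longrightarrow> f (x k) = y k"
    and fgraph: "{(t, f t) | t. t \<in> {x 0..x n}} = ifs_attractor fk n"
  assumes sigma_perm: "\<sigma> permutes {1..n}"
    and sigma_sort: "\<And>i j. 1 \<le> i \<Longrightarrow> i \<le> j \<Longrightarrow> j \<le> n \<Longrightarrow> s (\<sigma> i) \<le> s (\<sigma> j)"
  defines "D \<equiv> 1 - s (\<sigma> (n - 1)) * s (\<sigma> n)"
  defines "A \<equiv> min (Min ((\<lambda>j. v (\<sigma> j) - M * s (\<sigma> j) * (1 + s (\<sigma> n)) / (\<theta> * D)) ` {1..n - 1}))
                   (v (\<sigma> n) - M * s (\<sigma> n) * (1 + s (\<sigma> (n - 1))) / (\<theta> * D))"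
    and "B \<equiv> max (Max ((\<lambda>j. v (\<sigma> j) + M * s (\<sigma> j) * (1 + s (\<sigma> n)) / (\<theta> * D)) ` {1..n - 1}))
                   (v (\<sigma> n) + M * s (\<sigma> n) * (1 + s (\<sigma> (n - 1))) / (\<theta> * D))"
  shows "f ` {x 0..x n} \<subseteq> {A..B}"
proof -
  have xm: "x i < x j" if "i < j" "j \<le> n" for i j using xmono_aux[of n x, OF xinc] that by blast
  have L: "x n - x 0 > 0" using xm[of 0 n] n2 by simp
  have a_pos: "a k > 0" if "k \<in> {1..n}" for k
    unfolding a_def using xm[of "k - 1" k] that L by auto
  have a_lt1: "a k < 1" if k: "k \<in> {1..n}" for k
  proof -
    have "x k - x (k - 1) < x n - x 0"
    proof (cases "k - 1 = 0")
      case True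
      then have "k = 1" using k by auto
      then show ?thesis using xm[of 1 n] n2 by simp
    next
      case False
      then have "x 0 < x (k - 1)" using xm[of 0 "k - 1"] k by auto
      moreover have "x k \<le> x n" using xm[of k n] k by (cases "k = n") auto
      ultimately show ?thesis by simp
    qed
    then show ?thesis unfolding a_def using L by simp
  qed
  define maxa where "maxa = Max (a ` {1..n})"
  have a_le_max: "a k \<le> maxa" if "k \<in> {1..n}" for k unfolding maxa_def using that by simp
  have maxa_lt1: "maxa < 1"
  proof -
    have "maxa \<in> a ` {1..n}" unfolding maxa_def using n2 by (intro Max_in) auto
    then show ?thesis using a_lt1 by auto
  qed
  have th_facts: "\<theta> > 0 \<and> (\<forall>k\<in>{1..n}. a k + \<theta> * \<bar>c k\<bar> < 1)"
  proof (cases "\<forall>k\<in>{1..n}. c k = 0")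
    case True
    then show ?thesis unfolding \<theta>_def using a_lt1 by simp
  next
    case False
    then obtain k0 where k0: "k0 \<in> {1..n}" "c k0 \<noteq> 0" by blast
    define Mc where "Mc = Max ((\<lambda>k. \<bar>c k\<bar>) ` {1..n})"
    have c_le: "\<bar>c k\<bar> \<le> Mc" if "k \<in> {1..n}" for k unfolding Mc_def using that by simp
    have Mc0: "Mc > 0" using c_le[OF k0(1)] k0(2) by simp
    have thd: "\<theta> = (1 - maxa) / (2 * Mc)" unfolding \<theta>_def Mc_def maxa_def by (rule if_not_P[OF False])
    have thp: "\<theta> > 0" unfolding thd using Mc0 maxa_lt1 by simp
    have "a k + \<theta> * \<bar>c k\<bar> < 1" if k: "k \<in> {1..n}" for k
    proof -
      have "\<theta> * \<bar>c k\<bar> \<le> \<theta> * Mc" using c_le[OF k] thp by (simp add: mult_left_mono)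
      also have "\<dots> = (1 - maxa) / 2" unfolding thd using Mc0 by simp
      finally show ?thesis using a_le_max[OF k] maxa_lt1 by simp
    qed
    then show ?thesis using thp by blast
  qed
  have th: "\<theta> > 0" using th_facts by blast
  have s_range: "0 \<le> s k \<and> s k < 1" if k: "k \<in> {1..n}" for k
    unfolding s_def using th_facts drange[OF k] k by auto
  have contr_k: "rho \<theta> (fk k p) (fk k q) \<le> s k * rho \<theta> p q" if k: "k \<in> {1..n}" for k p q
  proof -
    define d1 where "d1 = fst p - fst q"
    define d2 where "d2 = snd p - snd q"
    have dk: "0 \<le> d k" using drange[OF k] by simp
    have e1: "rho \<theta> (fk k p) (fk k q) = \<bar>a k * d1\<bar> + \<theta> * \<bar>c k * d1 + d k * d2\<bar>"
      unfolding rho_def fk_def d1_def d2_def by (simp add: algebra_simps)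
    have "\<bar>c k * d1 + d k * d2\<bar> \<le> \<bar>c k\<bar> * \<bar>d1\<bar> + d k * \<bar>d2\<bar>"
      using abs_triangle_ineq[of "c k * d1" "d k * d2"] dk by (simp add: abs_mult)
    then have "\<theta> * \<bar>c k * d1 + d k * d2\<bar> \<le> \<theta> * (\<bar>c k\<bar> * \<bar>d1\<bar> + d k * \<bar>d2\<bar>)"
      using th by (simp add: mult_left_mono)
    moreover have "\<bar>a k * d1\<bar> = a k * \<bar>d1\<bar>" using a_pos[OF k] by (simp add: abs_mult)
    ultimately have "rho \<theta> (fk k p) (fk k q) \<le> (a k + \<theta> * \<bar>c k\<bar>) * \<bar>d1\<bar> + d k * (\<theta> * \<bar>d2\<bar>)"
      unfolding e1 by (simp add: algebra_simps)
    also have "\<dots> \<le> s k * \<bar>d1\<bar> + s k * (\<theta> * \<bar>d2\<bar>)"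
      unfolding s_def using th by (intro add_mono mult_right_mono) auto
    also have "\<dots> = s k * rho \<theta> p q" unfolding rho_def d1_def d2_def by (simp add: algebra_simps)
    finally show ?thesis .
  qed
  define S where "S = Max (s ` {1..n})"
  have s_le_S: "s k \<le> S" if "k \<in> {1..n}" for k unfolding S_def using that by simp
  have S1: "S < 1" "0 \<le> S"
  proof -
    have "S \<in> s ` {1..n}" unfolding S_def using n2 by (intro Max_in) auto
    then show "S < 1" "0 \<le> S" using s_range by auto
  qed
  have contr: "rho \<theta> (fk k p) (fk k q) \<le> S * rho \<theta> p q" if k: "k \<in> {1..n}" for k p q
    using contr_k[OF k, of p q] s_le_S[OF k] rho_nonneg[of \<theta> p q] th
    by (smt (verit) mult_right_mono)
  have cont: "continuous_on UNIV (fk k)" for k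
    unfolding fk_def by (intro continuous_intros)
  define p where "p = (\<lambda>k. (u k, v k))"
  have fixp: "fk k (p k) = p k" if k: "k \<in> {1..n}" for k
  proof -
    have a1: "1 - a k \<noteq> 0" using a_lt1[OF k] by simp
    have d1: "1 - d k \<noteq> 0" using drange[OF k] by simp
    show ?thesis unfolding fk_def p_def u_def v_def
      using fix_aux1[OF a1, of "b k"] fix_aux2[OF a1 d1, of "c k" "b k" "e k"] by simp
  qed
  have one: "1 \<in> {1..n}" using n2 by simp
  define G where "G = {(t, f t) | t. t \<in> {x 0..x n}}"
  have ex1: "\<exists>!K. K \<noteq> {} \<and> compact K \<and> K = (\<Union>k\<in>{1..n}. fk k ` K)"
    by (rule ifs_ex1[of \<theta> S n fk 1 "p 1", OF th S1(2) S1(1) contr cont one fixp[OF one]])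
  have PG: "G \<noteq> {} \<and> compact G \<and> G = (\<Union>k\<in>{1..n}. fk k ` G)"
    using theI'[OF ex1] fgraph unfolding G_def ifs_attractor_def by simp
  have "\<forall>k\<in>{1..n}. \<exists>z\<in>fk k ` G. \<forall>z'\<in>fk k ` G. rho \<theta> z' (p k) \<le> rho \<theta> z (p k)"
  proof
    fix k assume k: "k \<in> {1..n}"
    show "\<exists>z\<in>fk k ` G. \<forall>z'\<in>fk k ` G. rho \<theta> z' (p k) \<le> rho \<theta> z (p k)"
    proof (rule continuous_attains_sup)
      show "compact (fk k ` G)" using PG cont by (intro compact_continuous_image) (auto intro: continuous_on_subset)
      show "fk k ` G \<noteq> {}" using PG by simp
      show "continuous_on (fk k ` G) (\<lambda>z. rho \<theta> z (p k))" unfolding rho_def by (intro continuous_intros)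
    qed
  qed
  then obtain zm where zm: "\<And>k. k \<in> {1..n} \<Longrightarrow> zm k \<in> fk k ` G"
    "\<And>k z'. k \<in> {1..n} \<Longrightarrow> z' \<in> fk k ` G \<Longrightarrow> rho \<theta> z' (p k) \<le> rho \<theta> (zm k) (p k)"
    by metis
  define r where "r = (\<lambda>k. rho \<theta> (zm k) (p k))"
  have r0: "r k \<ge> 0" for k unfolding r_def using rho_nonneg th by simp
  have Mfin: "finite {\<bar>u i - u j\<bar> + \<theta> * \<bar>v i - v j\<bar> | i j. i \<in> {1..n} \<and> j \<in> {1..n}}"
    by (rule finite_image_set2) auto
  have pM: "rho \<theta> (p i) (p j) \<le> M" if "i \<in> {1..n}" "j \<in> {1..n}" for i j
    unfolding M_def rho_def p_def using that Mfin by (intro Max_ge) auto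
  have M0: "M \<ge> 0" using pM[OF one one] rho_nonneg[of \<theta>] th by (metis order_trans less_imp_le)
  have rec: "r k = 0 \<or> (\<exists>j\<in>{1..n}. j \<noteq> k \<and> r k \<le> s k * (r j + M))" if k: "k \<in> {1..n}" for k
  proof -
    obtain w where w: "w \<in> G" "zm k = fk k w" using zm(1)[OF k] by blast
    then obtain j w' where j: "j \<in> {1..n}" "w' \<in> G" "w = fk j w'" using PG by blast
    have rk: "r k \<le> s k * rho \<theta> w (p k)"
      unfolding r_def using contr_k[OF k, of w "p k"] w(2) fixp[OF k] by simp
    show ?thesis
    proof (cases "j = k")
      case True
      then have "rho \<theta> w (p k) \<le> r k" unfolding r_def using zm(2)[OF k] j by blast
      then have "r k \<le> s k * r k" using rk s_range[OF k] by (smt (verit) mult_left_mono)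
      then have "r k = 0" using s_range[OF k] r0[of k] by (smt (verit) mult_right_le_one_le mult_le_cancel_right1)
      then show ?thesis by simp
    next
      case False
      have "rho \<theta> w (p k) \<le> rho \<theta> w (p j) + rho \<theta> (p j) (p k)" using th by (intro rho_tri) auto
      also have "\<dots> \<le> r j + M" unfolding r_def using zm(2)[OF j(1)] j pM[OF j(1) k] by (intro add_mono) auto
      finally have "r k \<le> s k * (r j + M)" using rk s_range[OF k] by (smt (verit) mult_left_mono)
      then show ?thesis using j(1) False by blast
    qed
  qed
  note bc = bound_core[of n \<sigma> s M r D, OF n2 sigma_perm sigma_sort s_range M0 r0 rec D_def[THEN meta_eq_to_obj_eq]]
  show ?thesis
  proof
    fix z assume "z \<in> f ` {x 0..x n}"
    then obtain t where t: "t \<in> {x 0..x n}" "z = f t" by blast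
    then have "(t, f t) \<in> G" unfolding G_def by blast
    then obtain k w where k: "k \<in> {1..n}" "w \<in> G" "(t, f t) = fk k w" using PG by blast
    have "rho \<theta> (t, f t) (p k) \<le> r k" unfolding r_def using zm(2)[OF k(1)] k by auto
    then have hz: "\<theta> * \<bar>z - v k\<bar> \<le> r k" unfolding rho_def p_def t(2) by simp
    have Dp: "D > 0" by (rule bc(1))
    have key: "v k - R / (\<theta> * D) \<le> z \<and> z \<le> v k + R / (\<theta> * D)" if R: "r k \<le> R / D" for R
    proof -
      have "\<theta> * \<bar>z - v k\<bar> \<le> R / D" using hz R by simp
      then have "\<bar>z - v k\<bar> \<le> R / (\<theta> * D)" using th Dp by (simp add: field_simps)
      then show ?thesis by linarith
    qed
    have kin: "k \<in> \<sigma> ` {1..n}" using permutes_image[OF sigma_perm] k(1) by simp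
    then obtain i where i: "i \<in> {1..n}" "\<sigma> i = k" by blast
    show "z \<in> {A..B}"
    proof (cases "i = n")
      case True
      then have "r k \<le> M * s (\<sigma> n) * (1 + s (\<sigma> (n - 1))) / D" using bc(3) i by simp
      then have "v k - M * s (\<sigma> n) * (1 + s (\<sigma> (n - 1))) / (\<theta> * D) \<le> z \<and>
                 z \<le> v k + M * s (\<sigma> n) * (1 + s (\<sigma> (n - 1))) / (\<theta> * D)" by (rule key)
      then show ?thesis unfolding A_def B_def using True i by auto
    next
      case False
      then have iin: "i \<in> {1..n - 1}" using i by auto
      have "r k \<le> M * s k * (1 + s (\<sigma> n)) / D" using bc(2)[of k] k(1) by auto
      then have "r k \<le> M * s (\<sigma> i) * (1 + s (\<sigma> n)) / D" using i by simp
      then have h: "v (\<sigma> i) - M * s (\<sigma> i) * (1 + s (\<sigma> n)) / (\<theta> * D) \<le> z \<and>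
                 z \<le> v (\<sigma> i) + M * s (\<sigma> i) * (1 + s (\<sigma> n)) / (\<theta> * D)" using key i by simp
      have "Min ((\<lambda>j. v (\<sigma> j) - M * s (\<sigma> j) * (1 + s (\<sigma> n)) / (\<theta> * D)) ` {1..n - 1})
            \<le> v (\<sigma> i) - M * s (\<sigma> i) * (1 + s (\<sigma> n)) / (\<theta> * D)"
        using iin by (intro Min_le) auto
      moreover have "v (\<sigma> i) + M * s (\<sigma> i) * (1 + s (\<sigma> n)) / (\<theta> * D) \<le>
            Max ((\<lambda>j. v (\<sigma> j) + M * s (\<sigma> j) * (1 + s (\<sigma> n)) / (\<theta> * D)) ` {1..n - 1})"
        using iin by (intro Max_ge) auto
      ultimately show ?thesis unfolding A_def B_def using h by auto
    qed
  qed
qed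

end
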